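(* Let $G$ be a graph without isolated vertices, let $F\subseteq\varphi(G)$, and let $Z$ be a nondeterministic read-once branching program representing $F$. Let $u$ be a node of $Z$ and let $M=\{\{x_1,y_1\},\dots,\{x_q,y_q\}\}$ be a matching of $G$ such that $\{x_1,\dots,x_q\}$ and $\{y_1,\dots,y_q\}$ are separated by $u$. Then there is a set $X$ of $q$ vertices of $G$ containing exactly one vertex of each $\{x_i,y_i\}$ such that for every source-sink path $P$ of $Z$ passing through $u$, $X\subseteq A(P)$ (i.e. every variable of $X$ occurs positively in $A(P)$).
   Context: $\varphi(G)$ is the CNF on variables $V(G)$ with clauses $(u\vee v)$ for $\{u,v\}\in E(G)$; Boolean functions are identified with their sets of satisfying assignments (sets of literals), and $F\subseteq\varphi(G)$ means every satisfying assignment of $F$ satisfies $\varphi(G)$. A nondeterministic read-once branching program (NROBP) over variable set $X$ is a directed acyclic graph with one source and one sink, some edges labelled by literals over $X$, such that each variable occurs on exactly one edge of every source-sink path; $A(P)$ is the set of literals labelling path $P$, and the NROBP represents the function whose satisfying assignments are the sets $A(P)$ over source-sink paths $P$. A variable $x$ is located before node $v$ if on every source-sink path through $v$, $x$ occurs on the prefix ending at $v$; it is located after $v$ if it occurs on the suffix starting at $v$ on every such path. Two sets $X,Y$ of variables are separated by $v$ if either all of $X$ are located before $v$ and all of $Y$ after $v$, or vice versa. *)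

theory Defs
  imports Main
begin

datatype 'a lit = Pos 'a | Neg 'a

fun var :: "'a lit \<Rightarrow> 'a" where
  "var (Pos x) = x" | "var (Neg x) = x"

definition graph :: "'a set \<Rightarrow> 'a set set \<Rightarrow> bool" where
  "graph V E \<longleftrightarrow> finite V \<and> (\<forall>e\<in>E. \<exists>a b. e = {a, b} \<and> a \<noteq> b \<and> a \<in> V \<and> b \<in> V)"

definition no_isolated :: "'a set \<Rightarrow> 'a set set \<Rightarrow> bool" where
  "no_isolated V E \<longleftrightarrow> (\<forall>v\<in>V. \<exists>e\<in>E. v \<in> e)"

definition assignment :: "'a set \<Rightarrow> 'a lit set \<Rightarrow> bool" where
  "assignment V S \<longleftrightarrow> var ` S \<subseteq> V \<and> (\<forall>v\<in>V. (Pos v \<in> S) \<noteq> (Neg v \<in> S))"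

text \<open>The monotone 2-CNF phi(G), as its set of satisfying assignments.\<close>
definition phi :: "'a set \<Rightarrow> 'a set set \<Rightarrow> 'a lit set set" where
  "phi V E = {S. assignment V S \<and> (\<forall>e\<in>E. \<exists>v\<in>e. Pos v \<in> S)}"

type_synonym ('n, 'a) bedge = "'n \<times> 'a lit option \<times> 'n"

definition etail :: "('n, 'a) bedge \<Rightarrow> 'n" where "etail e = fst e"
definition elab :: "('n, 'a) bedge \<Rightarrow> 'a lit option" where "elab e = fst (snd e)"
definition ehead :: "('n, 'a) bedge \<Rightarrow> 'n" where "ehead e = snd (snd e)"

fun is_path :: "('n, 'a) bedge set \<Rightarrow> 'n \<Rightarrow> ('n, 'a) bedge list \<Rightarrow> 'n \<Rightarrow> bool" where
  "is_path E v [] w \<longleftrightarrow> v = w"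
| "is_path E v (e # es) w \<longleftrightarrow> e \<in> E \<and> etail e = v \<and> is_path E (ehead e) es w"

definition lits_of :: "('n, 'a) bedge list \<Rightarrow> 'a lit set" where
  "lits_of es = {l. Some l \<in> elab ` set es}"

definition occurs :: "'a \<Rightarrow> ('n, 'a) bedge \<Rightarrow> bool" where
  "occurs x e \<longleftrightarrow> elab e = Some (Pos x) \<or> elab e = Some (Neg x)"

definition nrobp :: "'a set \<Rightarrow> 'n set \<Rightarrow> ('n, 'a) bedge set \<Rightarrow> 'n \<Rightarrow> 'n \<Rightarrow> bool" where
  "nrobp X N E s t \<longleftrightarrow>
     finite N \<and> finite E \<and> (\<forall>e\<in>E. etail e \<in> N \<and> ehead e \<in> N) \<and> s \<in> N \<and> t \<in> N \<and>
     (\<forall>v es. is_path E v es v \<longrightarrow> es = []) \<and>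
     {v\<in>N. \<not> (\<exists>e\<in>E. ehead e = v)} = {s} \<and>
     {v\<in>N. \<not> (\<exists>e\<in>E. etail e = v)} = {t} \<and>
     (\<forall>e\<in>E. \<forall>l. elab e = Some l \<longrightarrow> var l \<in> X) \<and>
     (\<forall>es. is_path E s es t \<longrightarrow>
        (\<forall>x\<in>X. card {i. i < length es \<and> occurs x (es ! i)} = 1))"

definition represents :: "('n, 'a) bedge set \<Rightarrow> 'n \<Rightarrow> 'n \<Rightarrow> 'a lit set set \<Rightarrow> bool" where
  "represents E s t F \<longleftrightarrow> F = {lits_of es | es. is_path E s es t}"

definition located_before :: "('n, 'a) bedge set \<Rightarrow> 'n \<Rightarrow> 'n \<Rightarrow> 'a \<Rightarrow> 'n \<Rightarrow> bool" where
  "located_before E s t x u \<longleftrightarrow>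
     (\<forall>p1 p2. is_path E s p1 u \<and> is_path E u p2 t \<longrightarrow> (\<exists>e\<in>set p1. occurs x e))"

definition located_after :: "('n, 'a) bedge set \<Rightarrow> 'n \<Rightarrow> 'n \<Rightarrow> 'a \<Rightarrow> 'n \<Rightarrow> bool" where
  "located_after E s t x u \<longleftrightarrow>
     (\<forall>p1 p2. is_path E s p1 u \<and> is_path E u p2 t \<longrightarrow> (\<exists>e\<in>set p2. occurs x e))"

definition separated :: "('n, 'a) bedge set \<Rightarrow> 'n \<Rightarrow> 'n \<Rightarrow> 'a set \<Rightarrow> 'a set \<Rightarrow> 'n \<Rightarrow> bool" where
  "separated E s t A B u \<longleftrightarrow>
     ((\<forall>x\<in>A. located_before E s t x u) \<and> (\<forall>y\<in>B. located_after E s t y u)) \<or>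
     ((\<forall>x\<in>B. located_before E s t x u) \<and> (\<forall>y\<in>A. located_after E s t y u))"

end

theory Submission
  imports Defs
begin

lemma is_path_append:
  "is_path E v (p @ q) w \<longleftrightarrow> (\<exists>m. is_path E v p m \<and> is_path E m q w)"
  by (induction p arbitrary: v) auto

lemma lits_of_append: "lits_of (p @ q) = lits_of p \<union> lits_of q"
  unfolding lits_of_def by auto

lemma occurs_neg:
  assumes "e \<in> set p" "occurs a e" "Pos a \<notin> lits_of p"
  shows "Neg a \<in> lits_of p"
  using assms unfolding occurs_def lits_of_def by force

lemma key:
  assumes FP: "F \<subseteq> phi V GE" and R: "represents E s t F" and ab: "{a, b} \<in> GE"
    and la: "located_before E s t a u" and lb: "located_after E s t b u"
  shows "(\<forall>p1 p2. is_path E s p1 u \<and> is_path E u p2 t \<longrightarrow> Pos a \<in> lits_of (p1 @ p2)) \<or>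
         (\<forall>p1 p2. is_path E s p1 u \<and> is_path E u p2 t \<longrightarrow> Pos b \<in> lits_of (p1 @ p2))"
proof (rule ccontr)
  assume "\<not> ?thesis"
  then obtain p1 p2 p1' p2' where h: "is_path E s p1 u" "is_path E u p2 t"
    "Pos a \<notin> lits_of (p1 @ p2)" "is_path E s p1' u" "is_path E u p2' t"
    "Pos b \<notin> lits_of (p1' @ p2')" by blast
  from la h obtain e where e: "e \<in> set p1" "occurs a e" unfolding located_before_def by blast
  have na: "Neg a \<in> lits_of p1" using occurs_neg[OF e] h(3) by (simp add: lits_of_append)
  from lb h obtain e' where e': "e' \<in> set p2'" "occurs b e'" unfolding located_after_def by blast
  have nb: "Neg b \<in> lits_of p2'" using occurs_neg[OF e'] h(6) by (simp add: lits_of_append)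
  have "is_path E s (p1 @ p2') t" using h is_path_append by metis
  hence "lits_of (p1 @ p2') \<in> F" using R unfolding represents_def by blast
  hence S: "lits_of (p1 @ p2') \<in> phi V GE" using FP by blast
  let ?S = "lits_of (p1 @ p2')"
  have NA: "Neg a \<in> ?S" "Neg b \<in> ?S" using na nb by (auto simp: lits_of_append)
  have as: "assignment V ?S" and ex: "\<exists>v\<in>{a,b}. Pos v \<in> ?S" using S ab unfolding phi_def by auto
  have "a \<in> V" "b \<in> V" using as NA unfolding assignment_def by force+
  hence "Pos a \<notin> ?S" "Pos b \<notin> ?S" using as NA unfolding assignment_def by auto
  thus False using ex by auto
qed

theorem proposition2:
  fixes V :: "'a set" and GE :: "'a set set"
    and N :: "'n set" and E :: "('n, 'a) bedge set" and s t u :: 'n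
    and F :: "'a lit set set" and q :: nat and x y :: "nat \<Rightarrow> 'a"
  assumes "graph V GE" and "no_isolated V GE"
    and "F \<subseteq> phi V GE"
    and "nrobp V N E s t" and "represents E s t F"
    and "u \<in> N"
    and "\<forall>i<q. {x i, y i} \<in> GE"
    and "\<forall>i<q. \<forall>j<q. i \<noteq> j \<longrightarrow> {x i, y i} \<inter> {x j, y j} = {}"
    and "separated E s t (x ` {..<q}) (y ` {..<q}) u"
  shows "\<exists>X. X \<subseteq> (\<Union>i<q. {x i, y i}) \<and> card X = q \<and>
             (\<forall>i<q. card (X \<inter> {x i, y i}) = 1) \<and>
             (\<forall>p1 p2. is_path E s p1 u \<and> is_path E u p2 t \<longrightarrow>
                 (\<forall>v\<in>X. Pos v \<in> lits_of (p1 @ p2)))"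
proof -
  let ?G = "\<lambda>v. \<forall>p1 p2. is_path E s p1 u \<and> is_path E u p2 t \<longrightarrow> Pos v \<in> lits_of (p1 @ p2)"
  have D: "?G (x i) \<or> ?G (y i)" if i: "i < q" for i
  proof -
    have edge: "{x i, y i} \<in> GE" using assms(7) i by blast
    have "(located_before E s t (x i) u \<and> located_after E s t (y i) u) \<or>
          (located_before E s t (y i) u \<and> located_after E s t (x i) u)"
      using assms(9) i unfolding separated_def by blast
    thus ?thesis
    proof
      assume "located_before E s t (x i) u \<and> located_after E s t (y i) u"
      thus ?thesis using key[OF assms(3) assms(5) edge] by blast
    next
      assume h: "located_before E s t (y i) u \<and> located_after E s t (x i) u"
      have edge': "{y i, x i} \<in> GE" using edge by (simp add: insert_commute)
      show ?thesis using key[OF assms(3) assms(5) edge'] h by blast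
    qed
  qed
  define c where "c i = (if ?G (x i) then x i else y i)" for i
  have cG: "?G (c i)" if "i < q" for i using D[OF that] unfolding c_def by auto
  have cin: "c i \<in> {x i, y i}" for i unfolding c_def by auto
  have cj: "j = i" if "i < q" "j < q" "c j \<in> {x i, y i}" for i j
    using assms(8) that cin[of j] by blast
  have inj: "inj_on c {..<q}"
    by (rule inj_onI) (metis cin cj lessThan_iff)
  show ?thesis
  proof (intro exI conjI allI impI)
    show "c ` {..<q} \<subseteq> (\<Union>i<q. {x i, y i})" using cin by blast
    show "card (c ` {..<q}) = q" using card_image[OF inj] by simp
    fix i assume i: "i < q"
    have "c ` {..<q} \<inter> {x i, y i} = {c i}" using cj i cin by blast
    thus "card (c ` {..<q} \<inter> {x i, y i}) = 1" by simp
  next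
    fix p1 p2 assume "is_path E s p1 u \<and> is_path E u p2 t"
    thus "\<forall>v\<in>c ` {..<q}. Pos v \<in> lits_of (p1 @ p2)" using cG by blast
  qed
qed

end
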